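(* Let all rate functions below be monotone chemical. Consider: (MII) the network with reactions $1:\ \mathrm{NI}_1+\mathrm{NE}_1+\mathrm{D}_2\to\mathrm{NI}_1+\mathrm{NE}_2+\mathrm{D}_2$ and $2:\ \mathrm{NI}_2+\mathrm{NE}_2+\mathrm{D}_1\to\mathrm{NI}_2+\mathrm{NE}_1+\mathrm{D}_1$, with ODEs \[ [\dot{\mathrm{NE}}_1]=-r_1([\mathrm{NI}_1],[\mathrm{NE}_1],[\mathrm{D}_2])+r_2([\mathrm{NI}_2],[\mathrm{NE}_2],[\mathrm{D}_1]),\quad [\dot{\mathrm{NE}}_2]=-[\dot{\mathrm{NE}}_1],\quad [\dot{\mathrm{NI}}_1]=[\dot{\mathrm{NI}}_2]=[\dot{\mathrm D}_1]=[\dot{\mathrm D}_2]=0; \] (MIV) the network with reactions $1:\ 2\Lambda_1+\mathrm{D}_2\to\Lambda_1+\Lambda_2+\mathrm{D}_2$ and $2:\ 2\Lambda_2+\mathrm{D}_1\to\Lambda_2+\Lambda_1+\mathrm{D}_1$, with ODEs \[ [\dot\Lambda_1]=-r_1([\Lambda_1],[\mathrm{D}_2])+r_2([\Lambda_2],[\mathrm{D}_1]),\quad [\dot\Lambda_2]=-[\dot\Lambda_1],\quad [\dot{\mathrm D}_1]=[\dot{\mathrm D}_2]=0; \] (MV) the network with reactions $1:\ \Lambda_1+\mathrm{NE}_1+\Lambda_2\to\Lambda_1+\mathrm{NE}_2+\Lambda_2$ and $2:\ \Lambda_2+\mathrm{NE}_2+\Lambda_1\to\Lambda_2+\mathrm{NE}_1+\Lambda_1$,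 with ODEs \[ [\dot{\mathrm{NE}}_1]=-r_1([\Lambda_1],[\mathrm{NE}_1],[\Lambda_2])+r_2([\Lambda_2],[\mathrm{NE}_2],[\Lambda_1]),\quad [\dot{\mathrm{NE}}_2]=-[\dot{\mathrm{NE}}_1],\quad [\dot\Lambda_1]=[\dot\Lambda_2]=0. \] Then each of these three systems admits only one single steady state in each invariant set obtained by fixing the constant species and the conserved sum ($[\mathrm{NE}_1]+[\mathrm{NE}_2]$, resp. $[\Lambda_1]+[\Lambda_2]$), for all choices of monotone reaction functions $r_1,r_2$, and thus none of them has the capacity for differentiation.
   Context: A rate function $r_j$ is monotone chemical if it is nonnegative, positive exactly when all its reactant concentrations are positive, independent of non-reactant concentrations, and has positive partial derivative with respect to each reactant concentration at positive concentrations. Capacity for differentiation means the existence of a homogeneous positive steady state (concentrations of species with indices 1 and 2 equal, under identical rate functions for the two symmetric reactions) at which, for some admissible positive values of the partial derivatives of the rates, the Jacobian restricted to the invariant set is singular, enabling a zero-eigenvalue bifurcation to inhomogeneous steady states. *)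

theory Defs
  imports Complex_Main
begin

definition monotone_chemical :: "'a set \<Rightarrow> (('a \<Rightarrow> real) \<Rightarrow> real) \<Rightarrow> bool" where
  "monotone_chemical Rs R \<longleftrightarrow>
     (\<forall>x. (\<forall>s. 0 \<le> x s) \<longrightarrow> 0 \<le> R x) \<and>
     (\<forall>x. (\<forall>s. 0 \<le> x s) \<longrightarrow> (0 < R x \<longleftrightarrow> (\<forall>s\<in>Rs. 0 < x s))) \<and>
     (\<forall>x y. (\<forall>s\<in>Rs. x s = y s) \<longrightarrow> R x = R y) \<and>
     (\<forall>x. (\<forall>s. 0 < x s) \<longrightarrow>
        (\<forall>s\<in>Rs. \<exists>d>0. ((\<lambda>t. R (x(s := t))) has_real_derivative d) (at (x s))))"

text \<open>Mass-action-type ODE vector field: net stoichiometry vectors g1, g2 times rates.\<close>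
definition rxn_ode :: "('a \<Rightarrow> real) \<Rightarrow> ('a \<Rightarrow> real) \<Rightarrow> (('a \<Rightarrow> real) \<Rightarrow> real)
    \<Rightarrow> (('a \<Rightarrow> real) \<Rightarrow> real) \<Rightarrow> ('a \<Rightarrow> real) \<Rightarrow> ('a \<Rightarrow> real)" where
  "rxn_ode g1 g2 R1 R2 x = (\<lambda>s. g1 s * R1 x + g2 s * R2 x)"

definition steady_state where
  "steady_state g1 g2 R1 R2 x \<longleftrightarrow> rxn_ode g1 g2 R1 R2 x = (\<lambda>_. 0)"

definition positive_state :: "('a \<Rightarrow> real) \<Rightarrow> bool" where
  "positive_state x \<longleftrightarrow> (\<forall>s. 0 < x s)"

definition same_invariant_set :: "'a set \<Rightarrow> 'a \<Rightarrow> 'a \<Rightarrow> ('a \<Rightarrow> real) \<Rightarrow> ('a \<Rightarrow> real) \<Rightarrow> bool" where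
  "same_invariant_set C v1 v2 x y \<longleftrightarrow> (\<forall>s\<in>C. x s = y s) \<and> x v1 + x v2 = y v1 + y v2"

text \<open>Jacobian of the ODE (applied to a vector w), where the partial derivatives of
the rates are given by the parameters a (for reaction 1) and b (for reaction 2).\<close>
definition jac_apply :: "('a \<Rightarrow> real) \<Rightarrow> ('a \<Rightarrow> real) \<Rightarrow> 'a set \<Rightarrow> 'a set
    \<Rightarrow> ('a \<Rightarrow> real) \<Rightarrow> ('a \<Rightarrow> real) \<Rightarrow> ('a \<Rightarrow> real) \<Rightarrow> ('a \<Rightarrow> real)" where
  "jac_apply g1 g2 Rs1 Rs2 a b w =
     (\<lambda>s. g1 s * (\<Sum>t\<in>Rs1. a t * w t) + g2 s * (\<Sum>t\<in>Rs2. b t * w t))"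

text \<open>Capacity for differentiation. sigma swaps indices 1 and 2 of the species.
A homogeneous positive steady state under identical rate functions (R for reaction 1,
R composed with the swap for reaction 2), and admissible positive partial derivatives
making the Jacobian restricted to the tangent space of the invariant set singular.\<close>
definition capacity_for_differentiation ::
  "'a set \<Rightarrow> 'a set \<Rightarrow> ('a \<Rightarrow> real) \<Rightarrow> ('a \<Rightarrow> real) \<Rightarrow> 'a set \<Rightarrow> 'a \<Rightarrow> 'a \<Rightarrow> ('a \<Rightarrow> 'a) \<Rightarrow> bool" where
  "capacity_for_differentiation Rs1 Rs2 g1 g2 C v1 v2 \<sigma> \<longleftrightarrow>
     (\<exists>x R. positive_state x \<and> (\<forall>s. x (\<sigma> s) = x s) \<and>
        monotone_chemical Rs1 R \<and>
        steady_state g1 g2 R (\<lambda>z. R (z \<circ> \<sigma>)) x \<and>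
        (\<exists>a b. (\<forall>s\<in>Rs1. 0 < a s) \<and> (\<forall>s\<in>Rs2. 0 < b s) \<and>
           (\<exists>w. w \<noteq> (\<lambda>_. 0) \<and> (\<forall>s\<in>C. w s = 0) \<and> w v1 + w v2 = 0 \<and>
                jac_apply g1 g2 Rs1 Rs2 a b w = (\<lambda>_. 0))))"

datatype spII = NI1 | NI2 | NE1 | NE2 | D1 | D2

definition MII_Rs1 :: "spII set" where "MII_Rs1 = {NI1, NE1, D2}"
definition MII_Rs2 :: "spII set" where "MII_Rs2 = {NI2, NE2, D1}"
definition MII_g1 :: "spII \<Rightarrow> real" where
  "MII_g1 s = (if s = NE1 then -1 else if s = NE2 then 1 else 0)"
definition MII_g2 :: "spII \<Rightarrow> real" where
  "MII_g2 s = (if s = NE1 then 1 else if s = NE2 then -1 else 0)"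
definition MII_C :: "spII set" where "MII_C = {NI1, NI2, D1, D2}"
fun MII_swap :: "spII \<Rightarrow> spII" where
  "MII_swap NI1 = NI2" | "MII_swap NI2 = NI1" | "MII_swap NE1 = NE2" |
  "MII_swap NE2 = NE1" | "MII_swap D1 = D2" | "MII_swap D2 = D1"

datatype spIV = Lam1 | Lam2 | Dg1 | Dg2

definition MIV_Rs1 :: "spIV set" where "MIV_Rs1 = {Lam1, Dg2}"
definition MIV_Rs2 :: "spIV set" where "MIV_Rs2 = {Lam2, Dg1}"
definition MIV_g1 :: "spIV \<Rightarrow> real" where
  "MIV_g1 s = (if s = Lam1 then -1 else if s = Lam2 then 1 else 0)"
definition MIV_g2 :: "spIV \<Rightarrow> real" where
  "MIV_g2 s = (if s = Lam1 then 1 else if s = Lam2 then -1 else 0)"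
definition MIV_C :: "spIV set" where "MIV_C = {Dg1, Dg2}"
fun MIV_swap :: "spIV \<Rightarrow> spIV" where
  "MIV_swap Lam1 = Lam2" | "MIV_swap Lam2 = Lam1" | "MIV_swap Dg1 = Dg2" | "MIV_swap Dg2 = Dg1"

datatype spV = L1 | L2 | NEv1 | NEv2

definition MV_Rs1 :: "spV set" where "MV_Rs1 = {L1, NEv1, L2}"
definition MV_Rs2 :: "spV set" where "MV_Rs2 = {L2, NEv2, L1}"
definition MV_g1 :: "spV \<Rightarrow> real" where
  "MV_g1 s = (if s = NEv1 then -1 else if s = NEv2 then 1 else 0)"
definition MV_g2 :: "spV \<Rightarrow> real" where
  "MV_g2 s = (if s = NEv1 then 1 else if s = NEv2 then -1 else 0)"
definition MV_C :: "spV set" where "MV_C = {L1, L2}"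
fun MV_swap :: "spV \<Rightarrow> spV" where
  "MV_swap L1 = L2" | "MV_swap L2 = L1" | "MV_swap NEv1 = NEv2" | "MV_swap NEv2 = NEv1"

end

theory Submission
  imports Defs
begin

lemma mc_strict:
  assumes mc: "monotone_chemical Rs R" and sR: "s \<in> Rs"
    and px: "positive_state x" and py: "positive_state y"
    and agree: "\<forall>t\<in>Rs. t \<noteq> s \<longrightarrow> x t = y t" and lt: "x s < y s"
  shows "R x < R y"
proof -
  have indep: "\<forall>x y. (\<forall>s\<in>Rs. x s = y s) \<longrightarrow> R x = R y"
    and der: "\<forall>x. (\<forall>s. 0 < x s) \<longrightarrow>
        (\<forall>s\<in>Rs. \<exists>d>0. ((\<lambda>t. R (x(s := t))) has_real_derivative d) (at (x s)))"
    using mc unfolding monotone_chemical_def by blast+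
  define g where "g = (\<lambda>t. R (x(s := t)))"
  have "g (x s) < g (y s)"
  proof (rule DERIV_pos_imp_increasing[OF lt])
    fix t assume t1: "x s \<le> t" and t2: "t \<le> y s"
    have t: "x s \<le> t \<and> t \<le> y s" using t1 t2 by simp
    have pos: "\<forall>u. 0 < (x(s:=t)) u" using px t unfolding positive_state_def
      by (auto, smt (verit))
    have "\<exists>d>0. ((\<lambda>u. R ((x(s:=t))(s := u))) has_real_derivative d) (at ((x(s:=t)) s))"
      using der pos sR by blast
    then show "\<exists>d. (g has_real_derivative d) (at t) \<and> 0 < d"
      unfolding g_def by auto
  qed
  moreover have "R (x(s := y s)) = R y" using indep agree by auto
  ultimately show ?thesis by (simp add: g_def)
qed

lemma uniq:
  assumes m1: "monotone_chemical Rs1 R1" and m2: "monotone_chemical Rs2 R2"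
    and v1: "v1 \<in> Rs1" "v1 \<notin> Rs2" and v2: "v2 \<in> Rs2" "v2 \<notin> Rs1" and ne: "v1 \<noteq> v2"
    and px: "positive_state x" and py: "positive_state y"
    and ex: "R1 x = R2 x" and ey: "R1 y = R2 y"
    and ag: "\<forall>s. s \<noteq> v1 \<and> s \<noteq> v2 \<longrightarrow> x s = y s"
    and sm: "x v1 + x v2 = y v1 + y v2"
  shows "x = y"
proof -
  have "x v1 = y v1"
  proof (rule ccontr)
    assume "x v1 \<noteq> y v1"
    then consider "x v1 < y v1" | "y v1 < x v1" by linarith
    then show False
    proof cases
      case 1
      have a: "R1 x < R1 y"
        by (rule mc_strict[OF m1 v1(1) px py]) (use ag v2 1 in auto)
      have b: "R2 y < R2 x"
        by (rule mc_strict[OF m2 v2(1) py px]) (use ag v1 1 sm in auto)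
      show False using a b ex ey by linarith
    next
      case 2
      have a: "R1 y < R1 x"
        by (rule mc_strict[OF m1 v1(1) py px]) (use ag v2 2 in auto)
      have b: "R2 x < R2 y"
        by (rule mc_strict[OF m2 v2(1) px py]) (use ag v1 2 sm in auto)
      show False using a b ex ey by linarith
    qed
  qed
  moreover have "x v2 = y v2" using calculation sm by linarith
  ultimately show ?thesis using ag by (metis ext)
qed

lemma ss_eq: "steady_state g1 g2 R1 R2 x \<Longrightarrow> g1 v = -1 \<Longrightarrow> g2 v = 1 \<Longrightarrow> R1 x = R2 x"
  unfolding steady_state_def rxn_ode_def by (drule fun_cong[where x=v]) simp

theorem proposition4p2:
  shows
  "(\<forall>R1 R2. monotone_chemical MII_Rs1 R1 \<longrightarrow> monotone_chemical MII_Rs2 R2 \<longrightarrow>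
      (\<forall>x y. positive_state x \<longrightarrow> positive_state y \<longrightarrow>
         steady_state MII_g1 MII_g2 R1 R2 x \<longrightarrow> steady_state MII_g1 MII_g2 R1 R2 y \<longrightarrow>
         same_invariant_set MII_C NE1 NE2 x y \<longrightarrow> x = y)) \<and>
   (\<forall>R1 R2. monotone_chemical MIV_Rs1 R1 \<longrightarrow> monotone_chemical MIV_Rs2 R2 \<longrightarrow>
      (\<forall>x y. positive_state x \<longrightarrow> positive_state y \<longrightarrow>
         steady_state MIV_g1 MIV_g2 R1 R2 x \<longrightarrow> steady_state MIV_g1 MIV_g2 R1 R2 y \<longrightarrow>
         same_invariant_set MIV_C Lam1 Lam2 x y \<longrightarrow> x = y)) \<and>
   (\<forall>R1 R2. monotone_chemical MV_Rs1 R1 \<longrightarrow> monotone_chemical MV_Rs2 R2 \<longrightarrow>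
      (\<forall>x y. positive_state x \<longrightarrow> positive_state y \<longrightarrow>
         steady_state MV_g1 MV_g2 R1 R2 x \<longrightarrow> steady_state MV_g1 MV_g2 R1 R2 y \<longrightarrow>
         same_invariant_set MV_C NEv1 NEv2 x y \<longrightarrow> x = y)) \<and>
   \<not> capacity_for_differentiation MII_Rs1 MII_Rs2 MII_g1 MII_g2 MII_C NE1 NE2 MII_swap \<and>
   \<not> capacity_for_differentiation MIV_Rs1 MIV_Rs2 MIV_g1 MIV_g2 MIV_C Lam1 Lam2 MIV_swap \<and>
   \<not> capacity_for_differentiation MV_Rs1 MV_Rs2 MV_g1 MV_g2 MV_C NEv1 NEv2 MV_swap"
proof (intro conjI allI impI)
  fix R1 R2 x y
  assume m1: "monotone_chemical MII_Rs1 R1" and m2: "monotone_chemical MII_Rs2 R2"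
    and px: "positive_state x" and py: "positive_state y"
    and sx: "steady_state MII_g1 MII_g2 R1 R2 x" and sy: "steady_state MII_g1 MII_g2 R1 R2 y"
    and inv: "same_invariant_set MII_C NE1 NE2 x y"
  show "x = y"
  proof (rule uniq[OF m1 m2 _ _ _ _ _ px py])
    show "R1 x = R2 x" by (rule ss_eq[OF sx]) (simp_all add: MII_g1_def MII_g2_def)
    show "R1 y = R2 y" by (rule ss_eq[OF sy]) (simp_all add: MII_g1_def MII_g2_def)
    show "\<forall>s. s \<noteq> NE1 \<and> s \<noteq> NE2 \<longrightarrow> x s = y s"
    proof (intro allI impI)
      fix s assume "s \<noteq> NE1 \<and> s \<noteq> NE2"
      then show "x s = y s" using inv unfolding same_invariant_set_def MII_C_def
        by (cases s) auto
    qed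
    show "x NE1 + x NE2 = y NE1 + y NE2" using inv unfolding same_invariant_set_def by simp
  qed (auto simp: MII_Rs1_def MII_Rs2_def)
next
  fix R1 R2 x y
  assume m1: "monotone_chemical MIV_Rs1 R1" and m2: "monotone_chemical MIV_Rs2 R2"
    and px: "positive_state x" and py: "positive_state y"
    and sx: "steady_state MIV_g1 MIV_g2 R1 R2 x" and sy: "steady_state MIV_g1 MIV_g2 R1 R2 y"
    and inv: "same_invariant_set MIV_C Lam1 Lam2 x y"
  show "x = y"
  proof (rule uniq[OF m1 m2 _ _ _ _ _ px py])
    show "R1 x = R2 x" by (rule ss_eq[OF sx]) (simp_all add: MIV_g1_def MIV_g2_def)
    show "R1 y = R2 y" by (rule ss_eq[OF sy]) (simp_all add: MIV_g1_def MIV_g2_def)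
    show "\<forall>s. s \<noteq> Lam1 \<and> s \<noteq> Lam2 \<longrightarrow> x s = y s"
    proof (intro allI impI)
      fix s assume "s \<noteq> Lam1 \<and> s \<noteq> Lam2"
      then show "x s = y s" using inv unfolding same_invariant_set_def MIV_C_def
        by (cases s) auto
    qed
    show "x Lam1 + x Lam2 = y Lam1 + y Lam2" using inv unfolding same_invariant_set_def by simp
  qed (auto simp: MIV_Rs1_def MIV_Rs2_def)
next
  fix R1 R2 x y
  assume m1: "monotone_chemical MV_Rs1 R1" and m2: "monotone_chemical MV_Rs2 R2"
    and px: "positive_state x" and py: "positive_state y"
    and sx: "steady_state MV_g1 MV_g2 R1 R2 x" and sy: "steady_state MV_g1 MV_g2 R1 R2 y"
    and inv: "same_invariant_set MV_C NEv1 NEv2 x y"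
  show "x = y"
  proof (rule uniq[OF m1 m2 _ _ _ _ _ px py])
    show "R1 x = R2 x" by (rule ss_eq[OF sx]) (simp_all add: MV_g1_def MV_g2_def)
    show "R1 y = R2 y" by (rule ss_eq[OF sy]) (simp_all add: MV_g1_def MV_g2_def)
    show "\<forall>s. s \<noteq> NEv1 \<and> s \<noteq> NEv2 \<longrightarrow> x s = y s"
    proof (intro allI impI)
      fix s assume "s \<noteq> NEv1 \<and> s \<noteq> NEv2"
      then show "x s = y s" using inv unfolding same_invariant_set_def MV_C_def
        by (cases s) auto
    qed
    show "x NEv1 + x NEv2 = y NEv1 + y NEv2" using inv unfolding same_invariant_set_def by simp
  qed (auto simp: MV_Rs1_def MV_Rs2_def)
next
  show "\<not> capacity_for_differentiation MII_Rs1 MII_Rs2 MII_g1 MII_g2 MII_C NE1 NE2 MII_swap"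
  proof
    assume "capacity_for_differentiation MII_Rs1 MII_Rs2 MII_g1 MII_g2 MII_C NE1 NE2 MII_swap"
    then obtain a b w where a: "\<forall>s\<in>MII_Rs1. 0 < a s" and b: "\<forall>s\<in>MII_Rs2. 0 < b s"
      and w: "w \<noteq> (\<lambda>_. 0)" "\<forall>s\<in>MII_C. w s = 0" "w NE1 + w NE2 = 0"
      "jac_apply MII_g1 MII_g2 MII_Rs1 MII_Rs2 a b w = (\<lambda>_. 0)"
      unfolding capacity_for_differentiation_def by blast
    have "jac_apply MII_g1 MII_g2 MII_Rs1 MII_Rs2 a b w NE1 = 0" using w(4) by simp
    then have e: "- (a NE1 * w NE1) + b NE2 * w NE2 = 0"
      using w(2) by (simp add: jac_apply_def MII_g1_def MII_g2_def MII_Rs1_def MII_Rs2_def MII_C_def)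
    have pa: "0 < a NE1" "0 < b NE2" using a b by (auto simp: MII_Rs1_def MII_Rs2_def)
    have h2: "w NE2 = - w NE1" using w(3) by linarith
    have "(a NE1 + b NE2) * w NE1 = 0" using e h2 by (simp add: algebra_simps)
    then have "w NE1 = 0" using pa by simp
    then have "w = (\<lambda>_. 0)" using w(2,3) unfolding MII_C_def
    proof -
      assume h: "w NE1 = 0" "\<forall>s\<in>{NI1, NI2, D1, D2}. w s = 0" "w NE1 + w NE2 = 0"
      show ?thesis proof fix s show "w s = 0" using h by (cases s) auto qed
    qed
    then show False using w(1) by simp
  qed
next
  show "\<not> capacity_for_differentiation MIV_Rs1 MIV_Rs2 MIV_g1 MIV_g2 MIV_C Lam1 Lam2 MIV_swap"
  proof
    assume "capacity_for_differentiation MIV_Rs1 MIV_Rs2 MIV_g1 MIV_g2 MIV_C Lam1 Lam2 MIV_swap"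
    then obtain a b w where a: "\<forall>s\<in>MIV_Rs1. 0 < a s" and b: "\<forall>s\<in>MIV_Rs2. 0 < b s"
      and w: "w \<noteq> (\<lambda>_. 0)" "\<forall>s\<in>MIV_C. w s = 0" "w Lam1 + w Lam2 = 0"
      "jac_apply MIV_g1 MIV_g2 MIV_Rs1 MIV_Rs2 a b w = (\<lambda>_. 0)"
      unfolding capacity_for_differentiation_def by blast
    have "jac_apply MIV_g1 MIV_g2 MIV_Rs1 MIV_Rs2 a b w Lam1 = 0" using w(4) by simp
    then have e: "- (a Lam1 * w Lam1) + b Lam2 * w Lam2 = 0"
      using w(2) by (simp add: jac_apply_def MIV_g1_def MIV_g2_def MIV_Rs1_def MIV_Rs2_def MIV_C_def)
    have pa: "0 < a Lam1" "0 < b Lam2" using a b by (auto simp: MIV_Rs1_def MIV_Rs2_def)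
    have h2: "w Lam2 = - w Lam1" using w(3) by linarith
    have "(a Lam1 + b Lam2) * w Lam1 = 0" using e h2 by (simp add: algebra_simps)
    then have "w Lam1 = 0" using pa by simp
    then have "w = (\<lambda>_. 0)" using w(2,3) unfolding MIV_C_def
    proof -
      assume h: "w Lam1 = 0" "\<forall>s\<in>{Dg1, Dg2}. w s = 0" "w Lam1 + w Lam2 = 0"
      show ?thesis proof fix s show "w s = 0" using h by (cases s) auto qed
    qed
    then show False using w(1) by simp
  qed
next
  show "\<not> capacity_for_differentiation MV_Rs1 MV_Rs2 MV_g1 MV_g2 MV_C NEv1 NEv2 MV_swap"
  proof
    assume "capacity_for_differentiation MV_Rs1 MV_Rs2 MV_g1 MV_g2 MV_C NEv1 NEv2 MV_swap"
    then obtain a b w where a: "\<forall>s\<in>MV_Rs1. 0 < a s" and b: "\<forall>s\<in>MV_Rs2. 0 < b s"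
      and w: "w \<noteq> (\<lambda>_. 0)" "\<forall>s\<in>MV_C. w s = 0" "w NEv1 + w NEv2 = 0"
      "jac_apply MV_g1 MV_g2 MV_Rs1 MV_Rs2 a b w = (\<lambda>_. 0)"
      unfolding capacity_for_differentiation_def by blast
    have "jac_apply MV_g1 MV_g2 MV_Rs1 MV_Rs2 a b w NEv1 = 0" using w(4) by simp
    then have e: "- (a NEv1 * w NEv1) + b NEv2 * w NEv2 = 0"
      using w(2) by (simp add: jac_apply_def MV_g1_def MV_g2_def MV_Rs1_def MV_Rs2_def MV_C_def)
    have pa: "0 < a NEv1" "0 < b NEv2" using a b by (auto simp: MV_Rs1_def MV_Rs2_def)
    have h2: "w NEv2 = - w NEv1" using w(3) by linarith
    have "(a NEv1 + b NEv2) * w NEv1 = 0" using e h2 by (simp add: algebra_simps)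
    then have "w NEv1 = 0" using pa by simp
    then have "w = (\<lambda>_. 0)" using w(2,3) unfolding MV_C_def
    proof -
      assume h: "w NEv1 = 0" "\<forall>s\<in>{L1, L2}. w s = 0" "w NEv1 + w NEv2 = 0"
      show ?thesis proof fix s show "w s = 0" using h by (cases s) auto qed
    qed
    then show False using w(1) by simp
  qed
qed

end
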